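(* Let $P>0$ and $\sigma_b^2>0$. For each integer $L\ge1$ let $\beta_L\in(0,1)$ be the solution of $$\frac{(1-\beta^{2L})^2}{L^2\beta^{2L}(1-\beta^2)}=\frac{P}{\sigma_b^2 L},$$ and let $C_{sum}^{(L)}=-L\log_2(\beta_L)$. Then $$\lim_{L\to\infty}C_{sum}^{(L)}=\frac{\alpha}{\ln 2},$$ where $\alpha>0$ satisfies $$\frac{(1-e^{-2\alpha})^2}{2\alpha e^{-2\alpha}}=\frac{P}{\sigma_b^2}.$$
   Context: $C_{sum}^{(L)}$ is the maximum sum rate, with perfect feedback and broadcast SNR $P/\sigma_b^2$, of the $L$-user BMCL linear feedback scheme for the real AWGN broadcast channel with feedback; the claim is a statement about the displayed quantities only. *)

theory Defs
  imports Complex_Main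
begin

end

theory Submission
  imports Defs
begin
definition FF :: "real \<Rightarrow> real" where "FF x = (exp x - exp (-x))^2 / x"

lemma key_ineq: fixes z :: real assumes "z > 0"
  shows "exp z - exp (-z) < 2*z*(exp z + exp (-z))"
proof -
  have h1: "1 - 2*z \<le> exp (-(2*z))" by (rule exp_minus_ge)
  have e: "exp (-(2*z)) * exp (2*z) = 1" by (simp add: exp_minus field_simps)
  have "exp (2*z) * (1 - 2*z) \<le> exp (2*z) * exp (-(2*z))"
    using mult_left_mono[OF h1, of "exp (2*z)"] by simp
  hence "exp (2*z) * (1 - 2*z) \<le> 1" by (metis e mult.commute)
  hence lt: "exp (2*z) - 1 < 2*z*(exp (2*z) + 1)" using assms by (simp add: algebra_simps)
  have ee: "exp (2*z) = exp z * exp z" by (metis mult_2 exp_add)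
  have em: "exp z * exp (-z) = 1" by (simp add: exp_minus)
  have q1: "exp z * (exp z - exp (-z)) = exp (2*z) - 1" using ee em by (simp add: algebra_simps)
  have q2: "exp z * (2*z*(exp z + exp (-z))) = 2*z*(exp (2*z) + 1)"
  proof -
    have "exp z * (2*z*(exp z + exp (-z))) = 2*z*(exp z * exp z + exp z * exp (-z))" by (simp add: algebra_simps)
    thus ?thesis using ee em by simp
  qed
  have "exp z * (exp z - exp (-z)) < exp z * (2*z*(exp z + exp (-z)))"
    unfolding q1 q2 by (rule lt)
  thus ?thesis by simp
qed

lemma FF_mono: assumes "0 < x" "x < y" shows "FF x < FF y"
proof -
  have "FF x < FF y"
  proof (rule DERIV_pos_imp_increasing_open[OF assms(2)])
    fix z assume z: "x < z" "z < y"
    hence zp: "z > 0" using assms by simp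
    let ?s = "exp z - exp (-z)" and ?t = "exp z + exp (-z)"
    have "DERIV FF z :> (2*?s*?t*z - ?s^2) / z^2"
      unfolding FF_def[abs_def] using zp
      by (auto intro!: derivative_eq_intros simp: power2_eq_square field_simps)
    moreover have "?s > 0" using zp by simp
    moreover have "2*?s*?t*z - ?s^2 > 0"
    proof -
      have "?s * ?s < ?s * (2*z*?t)" using key_ineq[OF zp] \<open>?s > 0\<close> by simp
      thus ?thesis by (simp add: power2_eq_square algebra_simps)
    qed
    ultimately show "\<exists>d. DERIV FF z :> d \<and> d > 0" using zp by auto
  next
    show "continuous_on {x..y} FF" unfolding FF_def[abs_def] using assms
      by (auto intro!: continuous_intros)
  qed
  thus ?thesis .
qed

lemma sq_form: fixes x :: real
  shows "(exp x - exp (-x))^2 = (1 - exp (-2*x))^2 / exp (-2*x)"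
proof -
  define u where "u = exp (-x)"
  define v where "v = exp x"
  have uv: "v * u = 1" unfolding u_def v_def by (simp add: exp_minus)
  have up: "u > 0" unfolding u_def by simp
  have e2: "exp (-2*x) = u * u"
  proof -
    have "u * u = exp (-x + -x)" unfolding u_def by (rule exp_add[symmetric])
    also have "-x + -x = -2*x" by simp
    finally show ?thesis by simp
  qed
  have "v - u = (1 - u*u) / u" using uv up by (simp add: field_simps)
  hence "(v - u)^2 = (1 - u*u)^2 / (u*u)" by (simp add: power2_eq_square)
  thus ?thesis unfolding e2 u_def v_def .
qed

lemma low_bound: fixes y :: real assumes "y \<ge> 0" shows "y * (1 - y) \<le> 1 - exp (-y)"
proof -
  have a1: "1 + y \<le> exp y" by simp
  have a2: "1 - y \<le> exp (-y)" by (rule exp_minus_ge)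
  have em: "exp (-y) * exp y = 1" by (simp add: exp_minus)
  have "1 - exp (-y) = exp (-y) * (exp y - 1)" using em by (simp add: algebra_simps)
  also have "\<dots> \<ge> exp (-y) * y"
  proof -
    have "y \<le> exp y - 1" using a1 by linarith
    thus ?thesis by (intro mult_left_mono) auto
  qed
  finally have "1 - exp (-y) \<ge> exp (-y) * y" .
  moreover have "exp (-y) * y \<ge> (1 - y) * y" using a2 assms by (intro mult_right_mono) auto
  ultimately show ?thesis by (simp add: algebra_simps)
qed

lemma up_bound: fixes y :: real shows "1 - exp (-y) \<le> y"
  using exp_minus_ge[of y] by simp

lemma aux: fixes N L E Q c :: real
  assumes "N / (L^2*E*Q) = c/L" "L>0" "E>0" "Q>0" shows "N/E = c*L*Q"
proof -
  have "N = c/L * (L^2*E*Q)" using assms by (simp add: divide_eq_eq)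
  also have "\<dots> = (c*L*Q) * E" using assms(2) by (simp add: power2_eq_square field_simps)
  finally show ?thesis using assms(3) by simp
qed

theorem mainTheorem3:
  fixes P sb2 \<alpha> :: real and \<beta> :: "nat \<Rightarrow> real"
  assumes "P > 0" and "sb2 > 0"
    and "\<And>L. L \<ge> 1 \<Longrightarrow> 0 < \<beta> L \<and> \<beta> L < 1"
    and "\<And>L. L \<ge> 1 \<Longrightarrow>
           (1 - \<beta> L ^ (2*L))\<^sup>2 / ((real L)\<^sup>2 * \<beta> L ^ (2*L) * (1 - (\<beta> L)\<^sup>2))
             = P / (sb2 * real L)"
    and "\<alpha> > 0"
    and "(1 - exp (-2*\<alpha>))\<^sup>2 / (2*\<alpha>*exp (-2*\<alpha>)) = P / sb2"
  shows "(\<lambda>L. - real L * log 2 (\<beta> L)) \<longlonglongrightarrow> \<alpha> / ln 2"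
proof -
  define c where "c = P / sb2"
  have cpos: "c > 0" using assms(1,2) by (simp add: c_def)
  define a where "a L = - real L * ln (\<beta> L)" for L
  have Fal: "FF \<alpha> = 2*c"
  proof -
    have "(1 - exp (-2*\<alpha>))\<^sup>2 / exp (-2*\<alpha>) = 2*\<alpha>*c"
      using assms(6) assms(5) unfolding c_def[symmetric] by (simp add: field_simps)
    thus ?thesis unfolding FF_def sq_form using assms(5) by simp
  qed
  have props: "0 < a L \<and> a L \<le> \<alpha> \<and> FF (a L) \<ge> 2*c*(1 - 2*\<alpha>/real L)" if L: "L \<ge> 1" for L
  proof -
    have b: "0 < \<beta> L" "\<beta> L < 1" using assms(3)[OF L] by auto
    have Lp: "real L > 0" using L by simp
    have lnneg: "ln (\<beta> L) < 0" using b by simp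
    have apos: "a L > 0" unfolding a_def using lnneg Lp by (simp add: mult_pos_neg)
    define y where "y = 2 * a L / real L"
    have ypos: "y > 0" unfolding y_def using apos Lp by simp
    have E: "\<beta> L ^ (2*L) = exp (-2 * a L)"
    proof -
      have "\<beta> L ^ (2*L) = \<beta> L powr (real (2*L))" using b by (metis powr_realpow)
      also have "\<dots> = exp (real (2*L) * ln (\<beta> L))" using b by (simp add: powr_def)
      finally show ?thesis unfolding a_def by simp
    qed
    have B: "(\<beta> L)\<^sup>2 = exp (-y)"
    proof -
      have "(\<beta> L)\<^sup>2 = \<beta> L powr (real 2)" using b by (metis powr_realpow)
      also have "\<dots> = exp (2 * ln (\<beta> L))" using b by (simp add: powr_def)
      finally show ?thesis unfolding y_def a_def using Lp by simp
    qed
    have Bl: "exp (-y) < 1" using ypos by simp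
    have eq: "(1 - exp (-2 * a L))\<^sup>2 / ((real L)\<^sup>2 * exp (-2 * a L) * (1 - exp (-y))) = c / real L"
      using assms(4)[OF L] unfolding E B c_def divide_divide_eq_left .
    have eq2: "(1 - exp (-2 * a L))\<^sup>2 / exp (-2 * a L) = c * real L * (1 - exp (-y))"
      using aux[OF eq Lp] Bl by simp
    have Fa: "FF (a L) = c * real L * (1 - exp (-y)) / a L"
      unfolding FF_def sq_form eq2 by simp
    have yL: "real L * y / a L = 2" unfolding y_def using Lp apos by simp
    have up: "FF (a L) \<le> 2*c"
    proof -
      have "c * real L * (1 - exp (-y)) / a L \<le> c * real L * y / a L"
        using up_bound[of y] cpos Lp apos by (intro divide_right_mono mult_left_mono) auto
      also have "\<dots> = c * (real L * y / a L)" by simp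
      also have "\<dots> = 2 * c" using yL by simp
      finally show ?thesis using Fa by simp
    qed
    have ale: "a L \<le> \<alpha>"
    proof (rule ccontr)
      assume "\<not> a L \<le> \<alpha>"
      hence "FF \<alpha> < FF (a L)" using FF_mono[of \<alpha> "a L"] assms(5) by simp
      thus False using up Fal by simp
    qed
    have lo: "FF (a L) \<ge> 2*c*(1-y)"
    proof -
      have "c * real L * (y * (1 - y)) / a L \<le> c * real L * (1 - exp (-y)) / a L"
        using low_bound[of y] ypos cpos Lp apos by (intro divide_right_mono mult_left_mono) auto
      moreover have "c * real L * (y * (1 - y)) / a L = c * (1-y) * (real L * y / a L)"
        by (simp add: algebra_simps)
      moreover have "\<dots> = 2*c*(1-y)" using yL by simp
      ultimately show ?thesis using Fa by simp
    qed
    have "y \<le> 2*\<alpha>/real L" unfolding y_def using ale Lp by (simp add: divide_right_mono)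
    hence "2*c*(1-y) \<ge> 2*c*(1 - 2*\<alpha>/real L)" using cpos by (intro mult_left_mono) auto
    thus ?thesis using apos ale lo by simp
  qed
  have conv: "a \<longlonglongrightarrow> \<alpha>"
    unfolding LIMSEQ_iff
  proof (intro allI impI)
    fix r :: real assume r: "r > 0"
    define e where "e = min (r/2) (\<alpha>/2)"
    have e: "e > 0" "e < r" "e < \<alpha>" using r assms(5) by (auto simp: e_def)
    define d where "d = FF \<alpha> - FF (\<alpha> - e)"
    have d: "d > 0" unfolding d_def using FF_mono[of "\<alpha> - e" \<alpha>] e by simp
    obtain N :: nat where N: "4*\<alpha>*c/d < real N" using reals_Archimedean2 by blast
    show "\<exists>no. \<forall>n\<ge>no. norm (a n - \<alpha>) < r"
    proof (intro exI allI impI)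
      fix n assume n: "Suc N \<le> n"
      hence n1: "n \<ge> 1" by simp
      have np: "real n > 0" using n1 by simp
      have Nn: "real N < real n" using n by simp
      have "4*\<alpha>*c/d < real n" using N Nn by linarith
      hence "4*\<alpha>*c < real n * d" using d by (simp add: pos_divide_less_eq)
      hence "4*\<alpha>*c / real n < d" using np by (simp add: pos_divide_less_eq mult.commute)
      moreover have "2*c*(1 - 2*\<alpha>/real n) = 2*c - 4*\<alpha>*c/real n" by (simp add: algebra_simps)
      ultimately have gt: "FF (a n) > FF (\<alpha> - e)"
        using props[OF n1] unfolding d_def Fal by linarith
      have "a n > \<alpha> - e"
      proof (rule ccontr)
        assume "\<not> a n > \<alpha> - e"
        hence "a n \<le> \<alpha> - e" by simp
        hence "FF (a n) \<le> FF (\<alpha> - e)" using FF_mono[of "a n" "\<alpha> - e"] props[OF n1]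
          by (cases "a n = \<alpha> - e") auto
        thus False using gt by simp
      qed
      thus "norm (a n - \<alpha>) < r" using props[OF n1] e by simp
    qed
  qed
  have "(\<lambda>L. a L / ln 2) \<longlonglongrightarrow> \<alpha> / ln 2" by (intro tendsto_divide conv tendsto_const) simp
  moreover have "(\<lambda>L. - real L * log 2 (\<beta> L)) = (\<lambda>L. a L / ln 2)"
    unfolding a_def log_def by (simp add: fun_eq_iff)
  ultimately show ?thesis by simp
qed
end
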